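(* Let $A \in \mathbb{R}^{p \times n}$, $G \in \mathbb{R}^{p \times m}$, $c_x \in \mathbb{R}^n$, $c_y \in \mathbb{R}^m$, and for a right-hand side vector $b \in \mathbb{R}^p$ consider the mixed-binary linear program \[ g(b) := \min_{x, y} \; c_x^T x + c_y^T y \quad \text{s.t.} \quad Ax + Gy \geq b,\; x \in \{0,1\}^n,\; y \in \mathbb{R}^m . \] Fix $b \in \mathbb{R}^p$. Suppose $(x^*, y^* )$ is an optimal solution of this problem (with right-hand side $b$) which is unique in the integer component, i.e. every optimal solution of the problem with right-hand side $b$ has integer part $x^*$. Suppose moreover that there is a neighborhood of $b$ such that for every $\hat b$ in this neighborhood the problem with right-hand side $\hat b$ has a feasible solution whose integer component is $x^*$. Then there exists a neighborhood of $b$ such that for all $\hat b$ in this neighborhood, $x^*$ is the integer part of the optimal solution to the corresponding problem with right-hand side $\hat b$. *)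

theory Defs
  imports "HOL-Analysis.Analysis"
begin

definition mbl_feasible ::
  "real^'n^'p \<Rightarrow> real^'m^'p \<Rightarrow> real^'p \<Rightarrow> real^'n \<Rightarrow> real^'m \<Rightarrow> bool" where
  "mbl_feasible A G b x y \<longleftrightarrow>
     (\<forall>i. (A *v x + G *v y) $ i \<ge> b $ i) \<and> (\<forall>j. x $ j \<in> {0, 1})"

definition mbl_objective :: "real^'n \<Rightarrow> real^'m \<Rightarrow> real^'n \<Rightarrow> real^'m \<Rightarrow> real" where
  "mbl_objective cx cy x y = cx \<bullet> x + cy \<bullet> y"

definition mbl_optimal ::
  "real^'n^'p \<Rightarrow> real^'m^'p \<Rightarrow> real^'n \<Rightarrow> real^'m \<Rightarrow> real^'p \<Rightarrow> real^'n \<Rightarrow> real^'m \<Rightarrow> bool" where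
  "mbl_optimal A G cx cy b x y \<longleftrightarrow>
     mbl_feasible A G b x y \<and>
     (\<forall>x' y'. mbl_feasible A G b x' y' \<longrightarrow> mbl_objective cx cy x y \<le> mbl_objective cx cy x' y')"

end

theory Submission
  imports Defs
begin

lemma cch_sum:
  assumes "finite I" "\<And>i. i \<in> I \<Longrightarrow> f i \<in> convex_cone hull S"
  shows "sum f I \<in> convex_cone hull S"
  using assms by (induction I rule: finite_induct) (auto intro: convex_cone_hull_add convex_cone_hull_contains_0)

lemma matvec_axis: "(G::real^'m^'p) *v axis j 1 = column j G"
  by (simp add: matrix_vector_mult_def column_def axis_def vec_eq_iff if_distrib cong: if_cong)

lemma inner_axis_vec: "(cy::real^'m) \<bullet> axis j 1 = cy $ j"
  by (simp add: inner_vec_def axis_def if_distrib cong: if_cong)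

lemma matvec_neg: "(G::real^'m^'p) *v (- x) = - (G *v x)"
  using matrix_vector_mult_diff_distrib[of G 0 x] by simp

definition Qset :: "real^'m^'p \<Rightarrow> real^'m \<Rightarrow> ((real^'p) \<times> real) set" where
  "Qset G cy = {(G *v y - s, cy \<bullet> y + r) | y s r. (\<forall>i. 0 \<le> s$i) \<and> 0 \<le> r}"

lemma Qset_closed:
  fixes G :: "real^'m^'p" and cy :: "real^'m"
  shows "closed (Qset G cy)"
proof -
  define S :: "((real^'p) \<times> real) set" where "S = range (\<lambda>j. (column j G, cy$j)) \<union> range (\<lambda>j. -(column j G, cy$j))
      \<union> range (\<lambda>i. (-axis i 1, 0)) \<union> {(0,1)}"
  have fin: "finite S" unfolding S_def by auto
  have "Qset G cy = convex_cone hull S"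
  proof
    show "Qset G cy \<subseteq> convex_cone hull S"
    proof
      fix z assume "z \<in> Qset G cy"
      then obtain y s r where z: "z = (G *v y - s, cy \<bullet> y + r)" and s: "\<forall>i. 0 \<le> s$i" and r: "0 \<le> r"
        unfolding Qset_def by blast
      have eq: "z = (\<Sum>j\<in>UNIV. y$j *\<^sub>R (column j G, cy$j)) + (\<Sum>i\<in>UNIV. s$i *\<^sub>R (-axis i 1, 0)) + r *\<^sub>R (0,1)"
      proof -
        have "fst z = fst ((\<Sum>j\<in>UNIV. y$j *\<^sub>R (column j G, cy$j)) + (\<Sum>i\<in>UNIV. s$i *\<^sub>R (-axis i 1, 0)) + r *\<^sub>R (0,1))"
        proof -
          have "G *v y = (\<Sum>j\<in>UNIV. y$j *\<^sub>R column j G)"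
            by (simp add: matrix_mult_sum scalar_mult_eq_scaleR)
          moreover have "s = (\<Sum>i\<in>UNIV. s$i *\<^sub>R axis i 1)"
            using basis_expansion[of s] by (simp add: scalar_mult_eq_scaleR)
          ultimately show ?thesis using z by (simp add: fst_sum sum_negf)
        qed
        moreover have "snd z = snd ((\<Sum>j\<in>UNIV. y$j *\<^sub>R (column j G, cy$j)) + (\<Sum>i\<in>UNIV. s$i *\<^sub>R (-axis i 1, 0)) + r *\<^sub>R (0,1))"
          using z by (simp add: snd_sum inner_vec_def mult.commute)
        ultimately show ?thesis by (simp add: prod_eq_iff)
      qed
      have h1: "(\<Sum>j\<in>UNIV. y$j *\<^sub>R (column j G, cy$j)) \<in> convex_cone hull S"
      proof (rule cch_sum)
        fix j :: 'm
        show "y$j *\<^sub>R (column j G, cy$j) \<in> convex_cone hull S"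
        proof (cases "0 \<le> y$j")
          case True
          then show ?thesis by (intro convex_cone_hull_mul hull_inc) (auto simp: S_def)
        next
          case False
          have "(- y$j) *\<^sub>R (-(column j G, cy$j)) \<in> convex_cone hull S"
            using False by (intro convex_cone_hull_mul hull_inc) (auto simp: S_def)
          then show ?thesis by simp
        qed
      qed simp
      have h2: "(\<Sum>i\<in>UNIV. s$i *\<^sub>R (-axis i 1, 0::real)) \<in> convex_cone hull S"
        using s by (intro cch_sum convex_cone_hull_mul hull_inc) (auto simp: S_def)
      have h3: "r *\<^sub>R (0,1) \<in> convex_cone hull S"
        using r by (intro convex_cone_hull_mul hull_inc) (auto simp: S_def)
      show "z \<in> convex_cone hull S"
        unfolding eq by (intro convex_cone_hull_add h1 h2 h3)
    qed
  next
    show "convex_cone hull S \<subseteq> Qset G cy"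
    proof (rule hull_minimal)
      show "S \<subseteq> Qset G cy"
      proof -
        have "(column j G, cy$j) \<in> Qset G cy" for j
          unfolding Qset_def
          by (rule CollectI, rule exI[of _ "axis j 1"], rule exI[of _ 0], rule exI[of _ 0])
             (simp add: matvec_axis inner_axis_vec)
        moreover have "-(column j G, cy$j) \<in> Qset G cy" for j
        proof -
          have e1: "G *v (- axis j 1) = - column j G" by (simp only: matvec_neg matvec_axis)
          have e2: "cy \<bullet> (- axis j 1) = - cy $ j" by (simp only: inner_minus_right inner_axis_vec)
          show ?thesis unfolding Qset_def
            by (rule CollectI, rule exI[of _ "- axis j 1"], rule exI[of _ 0], rule exI[of _ 0])
               (simp only: e1 e2, simp)
        qed
        moreover have "(-axis i 1, 0) \<in> Qset G cy" for i
          unfolding Qset_def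
          by (rule CollectI, rule exI[of _ 0], rule exI[of _ "axis i 1"], rule exI[of _ 0])
             (simp add: axis_def)
        moreover have "(0,1) \<in> Qset G cy"
          unfolding Qset_def
          by (rule CollectI, rule exI[of _ 0], rule exI[of _ 0], rule exI[of _ 1]) simp
        ultimately show ?thesis unfolding S_def by auto
      qed
      show "convex_cone (Qset G cy)"
        unfolding convex_cone_iff
      proof (intro conjI ballI allI impI)
        show "0 \<in> Qset G cy" unfolding Qset_def
          by (rule CollectI, rule exI[of _ 0], rule exI[of _ 0], rule exI[of _ 0]) (simp add: zero_prod_def)
      next
        fix a c assume "a \<in> Qset G cy" "c \<in> Qset G cy"
        then obtain y1 s1 r1 y2 s2 r2 where "a = (G *v y1 - s1, cy \<bullet> y1 + r1)" "\<forall>i. 0 \<le> s1$i" "0 \<le> r1"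
          "c = (G *v y2 - s2, cy \<bullet> y2 + r2)" "\<forall>i. 0 \<le> s2$i" "0 \<le> r2"
          unfolding Qset_def by blast
        then show "a + c \<in> Qset G cy" unfolding Qset_def
          by (intro CollectI exI[of _ "y1+y2"] exI[of _ "s1+s2"] exI[of _ "r1+r2"])
             (simp add: matrix_vector_right_distrib inner_add_right algebra_simps)
      next
        fix a and c :: real assume "a \<in> Qset G cy" "0 \<le> c"
        then obtain y1 s1 r1 where "a = (G *v y1 - s1, cy \<bullet> y1 + r1)" "\<forall>i. 0 \<le> s1$i" "0 \<le> r1"
          unfolding Qset_def by blast
        then show "c *\<^sub>R a \<in> Qset G cy" using \<open>0 \<le> c\<close> unfolding Qset_def
          by (intro CollectI exI[of _ "c *\<^sub>R y1"] exI[of _ "c *\<^sub>R s1"] exI[of _ "c * r1"])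
             (simp add: matrix_vector_mult_scaleR algebra_simps)
      qed
    qed
  qed
  then show ?thesis using closed_convex_cone_hull[OF fin] by simp
qed


lemma feas_Q:
  fixes A :: "real^'n^'p" and G :: "real^'m^'p" and cx :: "real^'n" and cy :: "real^'m"
  assumes bin: "\<forall>j. x $ j \<in> {0, 1}"
  shows "(\<exists>y. mbl_feasible A G b' x y \<and> mbl_objective cx cy x y \<le> t) \<longleftrightarrow>
         (b' - A *v x, t - cx \<bullet> x) \<in> Qset G cy"
proof
  assume "\<exists>y. mbl_feasible A G b' x y \<and> mbl_objective cx cy x y \<le> t"
  then obtain y where f: "\<forall>i. (A *v x + G *v y) $ i \<ge> b' $ i" and o: "cx \<bullet> x + cy \<bullet> y \<le> t"
    unfolding mbl_feasible_def mbl_objective_def by blast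
  show "(b' - A *v x, t - cx \<bullet> x) \<in> Qset G cy"
    unfolding Qset_def
    by (rule CollectI, rule exI[of _ y], rule exI[of _ "A *v x + G *v y - b'"], rule exI[of _ "t - cx \<bullet> x - cy \<bullet> y"])
       (use f o in auto)
next
  assume "(b' - A *v x, t - cx \<bullet> x) \<in> Qset G cy"
  then obtain y s r where e: "(b' - A *v x, t - cx \<bullet> x) = (G *v y - s, cy \<bullet> y + r)"
    and s: "\<forall>i. 0 \<le> s$i" and r: "0 \<le> r" unfolding Qset_def by blast
  from e have e1: "A *v x + G *v y = b' + s" and e2: "cx \<bullet> x + cy \<bullet> y = t - r"
    by (auto simp: algebra_simps)
  have "mbl_feasible A G b' x y"
    unfolding mbl_feasible_def using e1 s bin by simp
  moreover have "mbl_objective cx cy x y \<le> t"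
    unfolding mbl_objective_def using e2 r by simp
  ultimately show "\<exists>y. mbl_feasible A G b' x y \<and> mbl_objective cx cy x y \<le> t" by blast
qed

lemma K_closed:
  fixes A :: "real^'n^'p" and G :: "real^'m^'p" and cx :: "real^'n" and cy :: "real^'m"
  shows "closed {(b', t). \<exists>y. mbl_feasible A G b' x y \<and> mbl_objective cx cy x y \<le> t}"
proof (cases "\<forall>j. x $ j \<in> {0, 1}")
  case True
  have "{(b', t). \<exists>y. mbl_feasible A G b' x y \<and> mbl_objective cx cy x y \<le> t}
        = (\<lambda>z. (fst z - A *v x, snd z - cx \<bullet> x)) -` Qset G cy"
    using feas_Q[OF True, of A G _ cx cy] by auto
  moreover have "closed ((\<lambda>z. (fst z - A *v x, snd z - cx \<bullet> x)) -` Qset G cy)"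
    by (intro continuous_closed_vimage Qset_closed) (intro continuous_intros)
  ultimately show ?thesis by simp
next
  case False
  then have "{(b', t). \<exists>y. mbl_feasible A G b' x y \<and> mbl_objective cx cy x y \<le> t} = {}"
    unfolding mbl_feasible_def by auto
  then show ?thesis by (simp only: closed_empty)
qed

lemma sep:
  fixes K :: "('a::metric_space \<times> real) set"
  assumes "closed K" "(b, t0) \<notin> K"
  shows "\<exists>e>0. \<forall>b' t. dist b' b < e \<longrightarrow> \<bar>t - t0\<bar> < e \<longrightarrow> (b', t) \<notin> K"
proof -
  have "open (- K)" using assms(1) by auto
  then obtain e where e: "e > 0" "\<forall>z. dist z (b, t0) < e \<longrightarrow> z \<in> - K"
    using assms(2) unfolding open_dist by (metis ComplI dist_commute)
  show ?thesis
  proof (intro exI[of _ "e/2"] conjI allI impI)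
    fix b' t assume h: "dist b' b < e/2" "\<bar>t - t0\<bar> < e/2"
    have "dist (b', t) (b, t0) \<le> dist b' b + dist t t0"
      unfolding dist_Pair_Pair by (rule sqrt_sum_squares_le_sum) auto
    also have "\<dots> < e" using h by (simp add: dist_real_def)
    finally show "(b', t) \<notin> K" using e by auto
  qed (use e in auto)
qed

lemma finite_min:
  assumes "finite I" "\<forall>i\<in>I. \<exists>e>0. P i (e::real)"
    and mono: "\<And>i e e'. P i e \<Longrightarrow> 0 < e' \<Longrightarrow> e' \<le> e \<Longrightarrow> P i e'"
  shows "\<exists>e>0. \<forall>i\<in>I. P i e"
  using assms(1,2)
proof (induction I rule: finite_induct)
  case empty then show ?case by (auto intro: exI[of _ 1])
next
  case (insert a I)
  then obtain e where e: "e > 0" "\<forall>i\<in>I. P i e" by auto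
  obtain e' where e': "e' > 0" "P a e'" using insert.prems by auto
  show ?case
    by (rule exI[of _ "min e e'"]) (use e e' mono in auto)
qed

lemma finite_bin: "finite {x::real^'n. \<forall>j. x $ j \<in> {0, 1}}"
proof -
  have "{x::real^'n. \<forall>j. x $ j \<in> {0, 1}} \<subseteq> vec_lambda ` (PiE UNIV (\<lambda>_. {0::real, 1}))"
  proof
    fix x :: "real^'n" assume "x \<in> {x. \<forall>j. x $ j \<in> {0, 1}}"
    then have "vec_nth x \<in> PiE UNIV (\<lambda>_. {0::real, 1})" by auto
    then show "x \<in> vec_lambda ` (PiE UNIV (\<lambda>_. {0::real, 1}))"
      by (metis image_eqI vec_nth_inverse)
  qed
  moreover have "finite (PiE (UNIV::'n set) (\<lambda>_. {0::real, 1}))" by (intro finite_PiE) auto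
  ultimately show ?thesis by (meson finite_imageI finite_subset)
qed


theorem proposition1:
  fixes A :: "real^'n^'p" and G :: "real^'m^'p"
    and cx :: "real^'n" and cy :: "real^'m"
    and b :: "real^'p" and xs :: "real^'n" and ys :: "real^'m"
  assumes opt: "mbl_optimal A G cx cy b xs ys"
    and uniq: "\<forall>x y. mbl_optimal A G cx cy b x y \<longrightarrow> x = xs"
    and feas_nbhd: "\<exists>U. open U \<and> b \<in> U \<and> (\<forall>b'\<in>U. \<exists>y. mbl_feasible A G b' xs y)"
  shows "\<exists>V. open V \<and> b \<in> V \<and>
           (\<forall>b'\<in>V. (\<exists>y. mbl_optimal A G cx cy b' xs y) \<and>
                    (\<forall>x y. mbl_optimal A G cx cy b' x y \<longrightarrow> x = xs))"
proof -
  obtain U where U: "open U" "b \<in> U" "\<forall>b'\<in>U. \<exists>y. mbl_feasible A G b' xs y"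
    using feas_nbhd by blast
  define v where "v = mbl_objective cx cy xs ys"
  define K where "K x = {(b', t). \<exists>y. mbl_feasible A G b' x y \<and> mbl_objective cx cy x y \<le> t}" for x
  have Kc: "closed (K x)" for x unfolding K_def by (rule K_closed)
  have optb: "mbl_feasible A G b xs ys" "\<And>x' y'. mbl_feasible A G b x' y' \<Longrightarrow> v \<le> mbl_objective cx cy x' y'"
    using opt unfolding mbl_optimal_def v_def by auto
  have "(b, v - 1) \<notin> K xs"
  proof
    assume "(b, v - 1) \<in> K xs"
    then obtain y where "mbl_feasible A G b xs y" "mbl_objective cx cy xs y \<le> v - 1"
      unfolding K_def by auto
    with optb(2) show False by fastforce
  qed
  from sep[OF Kc this] obtain e1 where e1: "e1 > 0"
    "\<forall>b' t. dist b' b < e1 \<longrightarrow> \<bar>t - (v - 1)\<bar> < e1 \<longrightarrow> (b', t) \<notin> K xs" by blast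
  have low: "v - 1 < mbl_objective cx cy xs y" if "dist b' b < e1" "mbl_feasible A G b' xs y" for b' y
  proof -
    have "(b', v - 1) \<notin> K xs" using e1 that by auto
    then show ?thesis using that unfolding K_def by auto
  qed
  define X where "X = {x::real^'n. \<forall>j. x $ j \<in> {0, 1}}"
  have finX: "finite (X - {xs})" unfolding X_def using finite_bin by auto
  define P where "P x e \<longleftrightarrow> (\<forall>b' y. dist b' b < e \<longrightarrow> mbl_feasible A G b' x y \<longrightarrow> v + e < mbl_objective cx cy x y)"
    for x and e :: real
  have "\<exists>e>0. P x e" if x: "x \<in> X - {xs}" for x
  proof -
    have "(b, v) \<notin> K x"
    proof
      assume "(b, v) \<in> K x"
      then obtain y where y: "mbl_feasible A G b x y" "mbl_objective cx cy x y \<le> v"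
        unfolding K_def by auto
      have "mbl_optimal A G cx cy b x y"
        unfolding mbl_optimal_def using y optb(2) by force
      with uniq x show False by auto
    qed
    from sep[OF Kc this] obtain e where e: "e > 0"
      "\<forall>b' t. dist b' b < e \<longrightarrow> \<bar>t - v\<bar> < e \<longrightarrow> (b', t) \<notin> K x" by blast
    have "P x (e/2)" unfolding P_def
    proof (intro allI impI)
      fix b' y assume h: "dist b' b < e/2" "mbl_feasible A G b' x y"
      have "(b', v + e/2) \<notin> K x" using e h by auto
      then show "v + e/2 < mbl_objective cx cy x y" using h unfolding K_def by auto
    qed
    then show ?thesis using e by (intro exI[of _ "e/2"]) auto
  qed
  then obtain e2 where e2: "e2 > 0" "\<forall>x\<in>X - {xs}. P x e2"
    using finite_min[OF finX, of P] unfolding P_def by force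
  obtain r where r: "r > 0" "ball b r \<subseteq> U" using U open_contains_ball by blast
  define \<rho> where "\<rho> = min r e1"
  define B where "B = ball b \<rho>"
  have \<rho>: "\<rho> > 0" using r e1 unfolding \<rho>_def by auto
  define W where "W b' = {t. (b', t) \<in> K xs}" for b'
  define f where "f b' = Inf (W b')" for b'
  have M: "\<exists>y. mbl_feasible A G b' xs y \<and> mbl_objective cx cy xs y = f b' \<and>
            (\<forall>y'. mbl_feasible A G b' xs y' \<longrightarrow> f b' \<le> mbl_objective cx cy xs y')"
    if b': "b' \<in> B" for b'
  proof -
    have bU: "b' \<in> U" and bd: "dist b' b < e1"
      using b' r unfolding B_def \<rho>_def by (auto simp: dist_commute)
    obtain y0 where y0: "mbl_feasible A G b' xs y0" using U bU by blast
    have inW: "mbl_objective cx cy xs y \<in> W b'" if "mbl_feasible A G b' xs y" for y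
      using that unfolding W_def K_def by auto
    have ne: "W b' \<noteq> {}" using inW[OF y0] by auto
    have bdd: "bdd_below (W b')"
    proof (rule bdd_belowI)
      fix t assume "t \<in> W b'"
      then obtain y where "mbl_feasible A G b' xs y" "mbl_objective cx cy xs y \<le> t"
        unfolding W_def K_def by auto
      then show "v - 1 \<le> t" using low[OF bd] by force
    qed
    have cl: "closed (W b')"
    proof -
      have "W b' = (\<lambda>t. (b', t)) -` K xs" unfolding W_def by auto
      moreover have "closed ((\<lambda>t. (b', t)) -` K xs)"
        by (intro continuous_closed_vimage Kc) (intro continuous_intros)
      ultimately show ?thesis by simp
    qed
    have "f b' \<in> W b'" unfolding f_def by (rule closed_contains_Inf[OF ne bdd cl])
    then obtain y where y: "mbl_feasible A G b' xs y" "mbl_objective cx cy xs y \<le> f b'"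
      unfolding W_def K_def by auto
    have lb: "\<forall>y'. mbl_feasible A G b' xs y' \<longrightarrow> f b' \<le> mbl_objective cx cy xs y'"
      unfolding f_def using inW bdd by (auto intro: cInf_lower)
    show ?thesis using y lb by (intro exI[of _ y]) (auto intro: antisym)
  qed
  have cvx: "convex_on B f"
  proof (rule convex_onI)
    show "convex B" unfolding B_def by simp
    fix t :: real and b1 b2 assume t: "0 < t" "t < 1" and b12: "b1 \<in> B" "b2 \<in> B"
    obtain y1 where y1: "mbl_feasible A G b1 xs y1" "mbl_objective cx cy xs y1 = f b1"
      using M[OF b12(1)] by blast
    obtain y2 where y2: "mbl_feasible A G b2 xs y2" "mbl_objective cx cy xs y2 = f b2"
      using M[OF b12(2)] by blast
    define y where "y = (1 - t) *\<^sub>R y1 + t *\<^sub>R y2"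
    define bb where "bb = (1 - t) *\<^sub>R b1 + t *\<^sub>R b2"
    have bbB: "bb \<in> B" unfolding bb_def B_def
      using b12 t convex_ball[of b \<rho>] unfolding B_def convex_alt by auto
    have veq: "A *v xs + G *v y = (1 - t) *\<^sub>R (A *v xs + G *v y1) + t *\<^sub>R (A *v xs + G *v y2)"
      unfolding y_def by (simp add: matrix_vector_right_distrib matrix_vector_mult_scaleR algebra_simps)
    have "mbl_feasible A G bb xs y"
      unfolding mbl_feasible_def
    proof (intro conjI allI)
      fix i
      have "(1 - t) * b1 $ i \<le> (1 - t) * (A *v xs + G *v y1) $ i"
        using y1(1) t unfolding mbl_feasible_def by (intro mult_left_mono) auto
      moreover have "t * b2 $ i \<le> t * (A *v xs + G *v y2) $ i"
        using y2(1) t unfolding mbl_feasible_def by (intro mult_left_mono) auto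
      ultimately show "bb $ i \<le> (A *v xs + G *v y) $ i"
        unfolding veq bb_def by simp
    next
      fix j show "xs $ j \<in> {0, 1}" using y1(1) unfolding mbl_feasible_def by auto
    qed
    then have "f bb \<le> mbl_objective cx cy xs y" using M[OF bbB] by blast
    also have "\<dots> = (1 - t) * mbl_objective cx cy xs y1 + t * mbl_objective cx cy xs y2"
      unfolding y_def mbl_objective_def by (simp add: inner_add_right algebra_simps)
    finally show "f ((1 - t) *\<^sub>R b1 + t *\<^sub>R b2) \<le> (1 - t) * f b1 + t * f b2"
      using y1 y2 unfolding bb_def by simp
  qed
  have "continuous_on B f" by (rule convex_on_continuous[OF _ cvx]) (simp add: B_def)
  moreover have bB: "b \<in> B" unfolding B_def using \<rho> by simp
  ultimately have "isCont f b"
    using continuous_on_eq_continuous_at[of B f] unfolding B_def by auto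
  then obtain \<delta> where \<delta>: "\<delta> > 0" "\<forall>b'. dist b' b < \<delta> \<longrightarrow> dist (f b') (f b) < e2"
    using e2(1) unfolding continuous_at_eps_delta by blast
  have fb: "f b = v"
  proof -
    obtain y where "mbl_feasible A G b xs y" "mbl_objective cx cy xs y = f b"
      "\<forall>y'. mbl_feasible A G b xs y' \<longrightarrow> f b \<le> mbl_objective cx cy xs y'"
      using M[OF bB] by blast
    then show ?thesis using optb unfolding v_def by (metis antisym)
  qed
  define V where "V = ball b (min \<rho> (min \<delta> e2))"
  show ?thesis
  proof (intro exI[of _ V] conjI ballI allI impI)
    show "open V" unfolding V_def by simp
    show "b \<in> V" unfolding V_def using \<rho> \<delta> e2 by simp
  next
    fix b' assume "b' \<in> V"
    then have bB': "b' \<in> B" and d1: "dist b' b < \<delta>" and d2: "dist b' b < e2"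
      unfolding V_def B_def by (auto simp: dist_commute)
    obtain y where y: "mbl_feasible A G b' xs y" "mbl_objective cx cy xs y = f b'"
      "\<forall>y'. mbl_feasible A G b' xs y' \<longrightarrow> f b' \<le> mbl_objective cx cy xs y'"
      using M[OF bB'] by blast
    have fl: "f b' < v + e2" using \<delta>(2) d1 fb by (auto simp: dist_real_def)
    have other: "v + e2 < mbl_objective cx cy x' y'"
      if "mbl_feasible A G b' x' y'" "x' \<noteq> xs" for x' y'
    proof -
      have "x' \<in> X - {xs}" using that unfolding X_def mbl_feasible_def by auto
      then show ?thesis using e2(2) d2 that unfolding P_def by blast
    qed
    have "mbl_optimal A G cx cy b' xs y"
      unfolding mbl_optimal_def
    proof (intro conjI allI impI)
      show "mbl_feasible A G b' xs y" by (rule y(1))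
      fix x' y' assume h: "mbl_feasible A G b' x' y'"
      show "mbl_objective cx cy xs y \<le> mbl_objective cx cy x' y'"
      proof (cases "x' = xs")
        case True then show ?thesis using y h by simp
      next
        case False then show ?thesis using other[OF h] fl y(2) by simp
      qed
    qed
    then show "\<exists>y. mbl_optimal A G cx cy b' xs y" by blast
    fix x y'' assume h: "mbl_optimal A G cx cy b' x y''"
    show "x = xs"
    proof (rule ccontr)
      assume "x \<noteq> xs"
      moreover have "mbl_feasible A G b' x y''" "mbl_objective cx cy x y'' \<le> mbl_objective cx cy xs y"
        using h y(1) unfolding mbl_optimal_def by auto
      ultimately show False using other fl y(2) by fastforce
    qed
  qed
qed

end
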